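(* For every vertex $x\in\Gamma$ and every $t\in\Gamma'_x$, all zeros of the polynomial $P_{x,t}$ are real. Moreover, for every $x\in\Gamma$, the zeros of $P_{x,x}$ and of $P_{x,x'}$ are simple, $\deg P_{x,x'}=\deg P_{x,x}+1$, and the zeros strictly interlace: if $a_1<a_2<\dots<a_n$ are the zeros of $P_{x,x'}$, then $P_{x,x}$ has exactly $n-1$ zeros $b_1<\dots<b_{n-1}$ and $a_1<b_1<a_2<b_2<\dots<b_{n-1}<a_n$.
   Context: Let $\Gamma$ be an infinite connected tree whose vertices are arranged in levels $\ell(x)\in\{0,1,2,\dots\}$: every vertex $x$ is adjacent to exactly one vertex $x'$ with $\ell(x')=\ell(x)+1$; for $\ell(x)\ge 1$ the set $N_x=\{y:\ y'=x\}$ of neighbours of $x$ on level $\ell(x)-1$ is finite and nonempty; $N_x=\emptyset$ if $\ell(x)=0$; there are no other edges. For $x\in\Gamma$, $\Gamma_x$ is the finite subtree consisting of $x$ and all its descendants (vertices $y$ with $\ell(y)<\ell(x)$ joined to $x$ by a path), and $\Gamma'_x=\Gamma_x\cup\{x'\}$. Fix numbers $\lambda_x>0$ and $\beta_x\in\mathbb R$, $x\in\Gamma$. The Jacobi matrix $J$ acts on functions $v:\Gamma\to\mathbb C$ by $(Jv)(x)=\lambda_x v(x')+\beta_x v(x)+\sum_{y\in N_x}\lambda_y v(y)$. The polynomials $P_{x,t}$ ($x\in\Gamma$, $t\in\Gamma'_x$) in the variable $z$ are defined recursively on $\ell(x)$: if $\ell(x)=0$ then $\Gamma'_x=\{x,x'\}$,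 $P_{x,x}=1$, $P_{x,x'}(z)=(z-\beta_x)/\lambda_x$. If $\ell(x)\ge1$: $P_{x,x}$ is the monic least common multiple of the polynomials $\{P_{y,x}:\ y\in N_x\}$; for $y\in N_x$ and $t\in\Gamma_y$, $P_{x,t}=P_{x,x}\,P_{y,t}/P_{y,x}$; and $P_{x,x'}=\lambda_x^{-1}\big((z-\beta_x)P_{x,x}-\sum_{y\in N_x}\lambda_yP_{x,y}\big)$. (These are polynomials with real coefficients and positive leading coefficients.) *)

theory Defs
  imports "HOL-Computational_Algebra.Computational_Algebra" "HOL-Computational_Algebra.Field_as_Ring"
begin

text \<open>The tree is given by a parent map par (x' = par x) and a level function.
  N x = children of x, desc x = Gamma_x (x and its descendants).\<close>

definition children :: "('v \<Rightarrow> 'v) \<Rightarrow> 'v \<Rightarrow> 'v set" where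
  "children par x = {y. par y = x}"

definition desc :: "('v \<Rightarrow> 'v) \<Rightarrow> 'v \<Rightarrow> 'v set" where
  "desc par x = {y. \<exists>k. (par ^^ k) y = x}"

definition desc' :: "('v \<Rightarrow> 'v) \<Rightarrow> 'v \<Rightarrow> 'v set" where
  "desc' par x = insert (par x) (desc par x)"

definition tree_struct :: "('v \<Rightarrow> 'v) \<Rightarrow> ('v \<Rightarrow> nat) \<Rightarrow> bool" where
  "tree_struct par lev \<longleftrightarrow>
     (\<forall>x. lev (par x) = Suc (lev x)) \<and>
     (\<forall>x. finite (children par x)) \<and>
     (\<forall>x. lev x \<ge> 1 \<longrightarrow> children par x \<noteq> {}) \<and>
     (\<forall>x y. \<exists>m n. (par ^^ m) x = (par ^^ n) y)"

text \<open>PQ n x t is P_{x,t} for a vertex x of level n (recursion on the level).\<close>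

primrec PQ :: "('v \<Rightarrow> 'v) \<Rightarrow> ('v \<Rightarrow> real) \<Rightarrow> ('v \<Rightarrow> real) \<Rightarrow> nat \<Rightarrow> 'v \<Rightarrow> 'v \<Rightarrow> real poly" where
  "PQ par lam bet 0 x t =
     (if t = x then 1
      else if t = par x then smult (1 / lam x) [:- bet x, 1:]
      else 0)"
| "PQ par lam bet (Suc n) x t =
     (let Pxx = Lcm ((\<lambda>y. PQ par lam bet n y x) ` children par x);
          Pxt = (\<lambda>y s. Pxx * PQ par lam bet n y s div PQ par lam bet n y x)
      in if t = x then Pxx
         else if t = par x then
           smult (1 / lam x) ([:- bet x, 1:] * Pxx - (\<Sum>y\<in>children par x. smult (lam y) (Pxt y y)))
         else if (\<exists>y\<in>children par x. t \<in> desc par y) then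
           Pxt (THE y. y \<in> children par x \<and> t \<in> desc par y) t
         else 0)"

definition Ppoly :: "('v \<Rightarrow> 'v) \<Rightarrow> ('v \<Rightarrow> nat) \<Rightarrow> ('v \<Rightarrow> real) \<Rightarrow> ('v \<Rightarrow> real) \<Rightarrow> 'v \<Rightarrow> 'v \<Rightarrow> real poly" where
  "Ppoly par lev lam bet x t = PQ par lam bet (lev x) x t"

end

theory Submission
  imports Defs
begin


definition rsimp :: "real poly \<Rightarrow> bool" where
  "rsimp f \<longleftrightarrow> f \<noteq> 0 \<and> card {x. poly f x = 0} = degree f"

definition CR :: "real poly \<Rightarrow> bool" where
  "CR f \<longleftrightarrow> f \<noteq> 0 \<and> (\<forall>z::complex. poly (map_poly complex_of_real f) z = 0 \<longrightarrow> z \<in> \<real>)"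

definition Wr :: "real poly \<Rightarrow> real poly \<Rightarrow> real \<Rightarrow> real" where
  "Wr p q x = poly (pderiv p) x * poly q x - poly p x * poly (pderiv q) x"

definition IL :: "real poly \<Rightarrow> real poly \<Rightarrow> bool" where
  "IL p q \<longleftrightarrow> rsimp p \<and> rsimp q \<and> lead_coeff p > 0 \<and> lead_coeff q > 0
     \<and> degree p = degree q + 1 \<and> (\<forall>x. Wr p q x > 0)"

lemma prod_lin_dvd:
  fixes f :: "real poly"
  assumes "finite R" "\<forall>b\<in>R. poly f b = 0"
  shows "(\<Prod>b\<in>R. [:-b,1:]) dvd f"
  using assms
proof (induction R rule: finite_induct)
  case empty then show ?case by simp
next
  case (insert b R)
  then obtain g where g: "f = (\<Prod>b\<in>R. [:-b,1:]) * g" by (auto elim: dvdE)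
  have "poly (\<Prod>b\<in>R. [:-b,1:]) b \<noteq> 0"
    using insert.hyps by (auto simp: poly_prod)
  moreover have "poly f b = 0" using insert.prems by auto
  ultimately have "poly g b = 0" using g by simp
  then obtain h where h: "g = [:-b,1:] * h" by (auto simp: poly_eq_0_iff_dvd elim: dvdE)
  have e: "(\<Prod>b\<in>insert b R. [:-b,1:]) = [:-b,1:] * (\<Prod>b\<in>R. [:-b,1:])"
    using insert.hyps by simp
  have "f = (\<Prod>b\<in>insert b R. [:-b,1:]) * h"
    unfolding e g h by (simp only: mult_ac)
  then show ?case by (rule dvdI)
qed

lemma prod_lin_ne0: "(\<Prod>b\<in>R. [:-b,1:]::real poly) \<noteq> 0"
  by (cases "finite R") auto

lemma degree_prod_lin: "finite R \<Longrightarrow> degree (\<Prod>b\<in>R. [:-b,1:]::real poly) = card R"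
  by (subst degree_prod_eq_sum_degree) auto

lemma lead_prod_lin: "lead_coeff (\<Prod>b\<in>R. [:-b,1:]::real poly) = 1"
  by (simp add: lead_coeff_prod)

lemma roots_prod_lin: "finite R \<Longrightarrow> {x. poly (\<Prod>b\<in>R. [:-b,1:]::real poly) x = 0} = R"
  by (auto simp: poly_prod)

lemma rsimp_prod_lin: "finite R \<Longrightarrow> rsimp (\<Prod>b\<in>R. [:-b,1:])"
  unfolding rsimp_def using prod_lin_ne0 roots_prod_lin degree_prod_lin by simp

lemma rsimp_factor:
  assumes "rsimp f"
  shows "f = smult (lead_coeff f) (\<Prod>b\<in>{x. poly f x = 0}. [:-b,1:])"
proof -
  let ?R = "{x. poly f x = 0}"
  let ?P = "\<Prod>b\<in>?R. [:-b,1:]::real poly"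
  have f0: "f \<noteq> 0" and c: "card ?R = degree f" using assms by (auto simp: rsimp_def)
  have fin: "finite ?R" using f0 poly_roots_finite by blast
  obtain g where g: "f = ?P * g" using prod_lin_dvd[OF fin] by (auto elim: dvdE)
  have g0: "g \<noteq> 0" using g f0 by auto
  have "degree f = degree ?P + degree g" by (metis g degree_mult_eq[OF prod_lin_ne0 g0])
  then have "degree g = 0" using degree_prod_lin[OF fin] c by simp
  then have gc: "g = [:lead_coeff g:]" by (metis degree_0_id)
  have "lead_coeff f = lead_coeff g" by (metis g lead_coeff_mult lead_prod_lin mult_1)
  then have "f = ?P * [:lead_coeff f:]" using g gc by metis
  then show ?thesis by simp
qed


lemma rsimp_fin: "rsimp f \<Longrightarrow> finite {x. poly f x = 0}"
  using poly_roots_finite rsimp_def by blast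

lemma deriv_root:
  assumes "rsimp f" "poly f r = 0"
  shows "poly (pderiv f) r = lead_coeff f * (\<Prod>b\<in>{x. poly f x = 0} - {r}. r - b)"
proof -
  let ?R = "{x. poly f x = 0}"
  let ?Q = "\<Prod>b\<in>?R-{r}. [:-b,1:]::real poly"
  have fin: "finite ?R" using rsimp_fin[OF assms(1)] .
  have "f = smult (lead_coeff f) (\<Prod>b\<in>?R. [:-b,1:])" by (rule rsimp_factor[OF assms(1)])
  also have "(\<Prod>b\<in>?R. [:-b,1:]) = [:-r,1:] * ?Q"
  proof -
    have "r \<in> ?R" using assms(2) by simp
    then show ?thesis by (rule prod.remove[OF fin])
  qed
  finally have "f = smult (lead_coeff f) ([:-r,1:] * ?Q)" .
  then have "pderiv f = smult (lead_coeff f) ([:-r,1:] * pderiv ?Q + ?Q * pderiv [:-r,1:])"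
    by (metis pderiv_smult pderiv_mult)
  then show ?thesis by (simp add: poly_prod pderiv_pCons)
qed

lemma deriv_consec:
  assumes "rsimp f" "poly f u = 0" "poly f v = 0" "u < v"
    and nb: "\<forall>w. poly f w = 0 \<longrightarrow> \<not> (u < w \<and> w < v)"
  shows "poly (pderiv f) u * poly (pderiv f) v < 0"
proof -
  let ?R = "{x. poly f x = 0}"
  let ?R' = "?R - {u} - {v}"
  have fin: "finite ?R" using rsimp_fin[OF assms(1)] .
  have c0: "lead_coeff f \<noteq> 0" using assms(1) by (simp add: rsimp_def)
  have e1: "(\<Prod>b\<in>?R - {u}. u - b) = (u - v) * (\<Prod>b\<in>?R'. u - b)"
    using prod.remove[of "?R - {u}" v "\<lambda>b. u - b"] fin assms by auto
  have "?R - {v} - {u} = ?R'" by auto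
  then have e2: "(\<Prod>b\<in>?R - {v}. v - b) = (v - u) * (\<Prod>b\<in>?R'. v - b)"
    using prod.remove[of "?R - {v}" u "\<lambda>b. v - b"] fin assms by auto
  have pos: "(\<Prod>b\<in>?R'. (u - b) * (v - b)) > 0"
  proof (rule prod_pos)
    fix b assume b: "b \<in> ?R'"
    then have "b < u \<or> b > v" using nb assms(4) by force
    then show "(u - b) * (v - b) > 0"
      using assms(4) by (auto intro: mult_pos_pos mult_neg_neg)
  qed
  have "poly (pderiv f) u * poly (pderiv f) v
      = - ((lead_coeff f)^2 * (v - u)^2 * (\<Prod>b\<in>?R'. (u - b) * (v - b)))"
    unfolding deriv_root[OF assms(1,2)] deriv_root[OF assms(1,3)] e1 e2 prod.distrib
    by (simp add: power2_eq_square algebra_simps)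
  also have "\<dots> < 0" using pos c0 assms(4) by (simp add: mult_pos_pos)
  finally show ?thesis .
qed

lemma deriv_max:
  assumes "rsimp f" "lead_coeff f > 0" "poly f M = 0" "\<forall>w. poly f w = 0 \<longrightarrow> w \<le> M"
  shows "poly (pderiv f) M > 0"
proof -
  have "(\<Prod>b\<in>{x. poly f x = 0} - {M}. M - b) > 0"
    using assms(4) by (intro prod_pos) (auto simp: le_less)
  then show ?thesis unfolding deriv_root[OF assms(1,3)] using assms(2) by simp
qed

lemma gap_root:
  assumes "rsimp f" "poly f u = 0" "poly f v = 0" "u < v"
    and nb: "\<forall>w. poly f w = 0 \<longrightarrow> \<not> (u < w \<and> w < v)"
    and gu: "poly g u * poly (pderiv f) u > 0" and gv: "poly g v * poly (pderiv f) v > 0"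
  shows "\<exists>r>u. r < v \<and> poly g r = 0"
proof -
  have d: "poly (pderiv f) u * poly (pderiv f) v < 0" by (rule deriv_consec[OF assms(1-5)])
  have "(poly g u * poly (pderiv f) u) * (poly g v * poly (pderiv f) v) > 0"
    using gu gv by simp
  then have "(poly g u * poly g v) * (poly (pderiv f) u * poly (pderiv f) v) > 0"
    by (simp add: algebra_simps)
  then have "poly g u * poly g v < 0" using d
    by (meson mult_nonneg_nonpos not_le less_imp_le)
  then show ?thesis using poly_IVT[OF assms(4)] by blast
qed

lemma count_gaps:
  fixes R :: "real set"
  assumes "finite R"
  shows "\<forall>S. finite S \<longrightarrow>
     (\<forall>u\<in>R. \<forall>v\<in>R. u < v \<and> (\<forall>w\<in>R. \<not>(u<w \<and> w<v)) \<longrightarrow> (\<exists>s\<in>S. u<s \<and> s<v)) \<longrightarrow>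
     (R \<noteq> {} \<longrightarrow> (\<exists>s\<in>S. Max R < s)) \<longrightarrow> card R \<le> card S"
  using assms
proof (induction R rule: finite_linorder_max_induct)
  case empty then show ?case by simp
next
  case (insert b A)
  show ?case
  proof (intro allI impI)
    fix S :: "real set"
    assume S: "finite S"
      and gaps: "\<forall>u\<in>insert b A. \<forall>v\<in>insert b A. u < v \<and> (\<forall>w\<in>insert b A. \<not>(u<w \<and> w<v)) \<longrightarrow> (\<exists>s\<in>S. u<s \<and> s<v)"
      and top: "insert b A \<noteq> {} \<longrightarrow> (\<exists>s\<in>S. Max (insert b A) < s)"
    have Mx: "Max (insert b A) = b" using insert by (intro Max_insert2) auto
    obtain s1 where s1: "s1 \<in> S" "b < s1" using top Mx by auto
    have bA: "b \<notin> A" using insert by auto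
    show "card (insert b A) \<le> card S"
    proof (cases "A = {}")
      case True
      have "card S \<noteq> 0" using s1 S by auto
      then show ?thesis using True by simp
    next
      case False
      define M' where "M' = Max A"
      have M'A: "M' \<in> A" using False insert M'_def by simp
      have M'le: "\<forall>a\<in>A. a \<le> M'" using insert M'_def by simp
      have "M' < b" using M'A insert by auto
      moreover have "\<forall>w\<in>insert b A. \<not>(M'<w \<and> w<b)" using M'le by auto
      ultimately have "\<exists>s\<in>S. M' < s \<and> s < b"
        using gaps[rule_format, OF insertI2[OF M'A] insertI1] by blast
      then obtain s0 where s0: "s0 \<in> S" "M' < s0" "s0 < b" by blast
      define S' where "S' = S \<inter> {..<b}"
      have "card A \<le> card S'"
      proof -
        have f1: "finite S'" using S S'_def by simp
        have f2: "\<forall>u\<in>A. \<forall>v\<in>A. u < v \<and> (\<forall>w\<in>A. \<not>(u<w \<and> w<v)) \<longrightarrow> (\<exists>s\<in>S'. u<s \<and> s<v)"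
        proof (intro ballI impI)
          fix u v assume uv: "u \<in> A" "v \<in> A" "u < v \<and> (\<forall>w\<in>A. \<not>(u<w \<and> w<v))"
          have vb: "v < b" using uv insert by auto
          have nw: "\<forall>w\<in>insert b A. \<not>(u<w \<and> w<v)"
          proof
            fix w assume w: "w \<in> insert b A"
            show "\<not>(u<w \<and> w<v)"
            proof (cases "w = b")
              case True then show ?thesis using vb by simp
            next
              case False then have "w \<in> A" using w by simp
              then show ?thesis using uv(3) by blast
            qed
          qed
          have "\<exists>s\<in>S. u < s \<and> s < v"
            by (rule gaps[rule_format, OF insertI2[OF uv(1)] insertI2[OF uv(2)] conjI[OF conjunct1[OF uv(3)] nw]])
          then obtain s where "s \<in> S" "u < s" "s < v" by blast
          then show "\<exists>s\<in>S'. u<s \<and> s<v" using vb S'_def by auto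
        qed
        have f3: "A \<noteq> {} \<longrightarrow> (\<exists>s\<in>S'. Max A < s)"
          using s0 S'_def M'_def by auto
        have "finite S' \<longrightarrow>
     (\<forall>u\<in>A. \<forall>v\<in>A. u < v \<and> (\<forall>w\<in>A. \<not>(u<w \<and> w<v)) \<longrightarrow> (\<exists>s\<in>S'. u<s \<and> s<v)) \<longrightarrow>
     (A \<noteq> {} \<longrightarrow> (\<exists>s\<in>S'. Max A < s)) \<longrightarrow> card A \<le> card S'"
          using insert.IH by (rule allE)
        then show ?thesis using mp[OF mp[OF mp[OF _ f1] f2] f3] by blast
      qed
      moreover have "card S' < card S"
      proof (rule psubset_card_mono[OF S])
        have "S' \<subseteq> S" unfolding S'_def by blast
        moreover have "s1 \<notin> S'" unfolding S'_def using s1(2) by simp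
        ultimately show "S' \<subset> S" using s1(1) by blast
      qed
      ultimately show ?thesis using bA insert by simp
    qed
  qed
qed

lemma deg1_form:
  fixes h :: "real poly"
  assumes "degree h = 1"
  shows "h = [:coeff h 0, coeff h 1:]"
proof (rule poly_eqI)
  fix n show "coeff h n = coeff [:coeff h 0, coeff h 1:] n"
    using assms by (cases n; cases "n - 1") (auto simp: coeff_eq_0 coeff_pCons)
qed

lemma double_root_deriv: "poly (pderiv ([:-r,1:] * ([:-r,1:] * K))) r = (0::real)"
  unfolding pderiv_mult poly_add poly_mult by simp

lemma rsimp_complete:
  fixes p :: "real poly"
  assumes p0: "p \<noteq> 0" and sr: "\<forall>r. poly p r = 0 \<longrightarrow> poly (pderiv p) r \<noteq> 0"
    and cnt: "degree p \<le> card {x. poly p x = 0} + 1"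
  shows "rsimp p"
proof -
  define R where "R = {x. poly p x = 0}"
  have fin: "finite R" using p0 poly_roots_finite R_def by blast
  have le: "card R \<le> degree p" using card_poly_roots_bound[OF p0] R_def by simp
  show ?thesis
  proof (cases "card R = degree p")
    case True then show ?thesis using p0 R_def by (simp add: rsimp_def)
  next
    case False
    moreover have "degree p \<le> card R + 1" using cnt R_def by simp
    ultimately have dc: "degree p = card R + 1" using le by linarith
    have "\<forall>b\<in>R. poly p b = 0" using R_def by simp
    from prod_lin_dvd[OF fin this] obtain h where h: "p = (\<Prod>b\<in>R. [:-b,1:]) * h"
      by (elim dvdE)
    have h0: "h \<noteq> 0" using h p0 by auto
    have "degree ((\<Prod>b\<in>R. [:-b,1:]) * h) = degree (\<Prod>b\<in>R. [:-b,1:]) + degree h"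
      by (rule degree_mult_eq[OF prod_lin_ne0 h0])
    then have "degree p = card R + degree h" using h degree_prod_lin[OF fin] by simp
    then have dh: "degree h = 1" using dc by simp
    then have c1: "coeff h 1 \<noteq> 0" using h0 by (metis leading_coeff_0_iff)
    define r0 where "r0 = - coeff h 0 / coeff h 1"
    have "poly h r0 = coeff h 0 + r0 * coeff h 1" by (subst deg1_form[OF dh]) simp
    moreover have "coeff h 0 + r0 * coeff h 1 = 0" unfolding r0_def using c1 by simp
    ultimately have hr: "poly h r0 = 0" by simp
    have pr0: "poly p r0 = 0" using h hr by simp
    then have "r0 \<in> R" using R_def by simp
    then have "poly (\<Prod>b\<in>R. [:-b,1:]) r0 = 0" using fin by (auto simp: poly_prod)
    then obtain A where A: "(\<Prod>b\<in>R. [:-b,1:]) = [:-r0,1:] * A"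
      by (auto simp: poly_eq_0_iff_dvd elim: dvdE)
    obtain B where B: "h = [:-r0,1:] * B" using hr by (auto simp: poly_eq_0_iff_dvd elim: dvdE)
    have "p = [:-r0,1:] * ([:-r0,1:] * (A * B))" using h A B by (simp only: mult_ac)
    then have "poly (pderiv p) r0 = 0" using double_root_deriv by metis
    with sr pr0 show ?thesis by blast
  qed
qed

lemma order_one:
  fixes p :: "real poly"
  assumes "poly p a = 0" "poly (pderiv p) a \<noteq> 0"
  shows "order a p = 1"
proof -
  have p0: "p \<noteq> 0" using assms by auto
  have "pderiv p \<noteq> 0" using assms by auto
  then have "order a (pderiv p) = 0" using assms(2) order_root by blast
  then show ?thesis using order_pderiv[OF p0 assms(1)] by simp
qed

lemma map_ofr_add: "map_poly complex_of_real (p + q) = map_poly of_real p + map_poly of_real q"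
  by (rule poly_eqI) (simp add: coeff_map_poly)

lemma map_ofr_mult: "map_poly complex_of_real (p * q) = map_poly of_real p * map_poly of_real q"
  by (induction p) (simp_all add: map_poly_pCons map_poly_smult map_ofr_add)

lemma CR_mult: "CR p \<Longrightarrow> CR q \<Longrightarrow> CR (p * q)"
  unfolding CR_def by (auto simp: map_ofr_mult)

lemma CR_right: "CR (p * q) \<Longrightarrow> CR q"
  unfolding CR_def by (auto simp: map_ofr_mult)

lemma CR_const: "c \<noteq> 0 \<Longrightarrow> CR [:c:]"
  unfolding CR_def by (simp add: map_poly_pCons)

lemma CR_lin: "CR [:-b,1:]"
  unfolding CR_def by (auto simp: map_poly_pCons)

lemma CR_prod_lin: "finite R \<Longrightarrow> CR (\<Prod>b\<in>R. [:-b,1:])"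
proof (induction R rule: finite_induct)
  case empty then show ?case using CR_const[of 1] by (simp add: one_pCons)
next
  case (insert b R) then show ?case by (metis CR_mult CR_lin prod.insert)
qed

lemma CR_rsimp: assumes "rsimp f" shows "CR f"
proof -
  have "f = [:lead_coeff f:] * (\<Prod>b\<in>{x. poly f x = 0}. [:-b,1:])"
    using rsimp_factor[OF assms] by simp
  moreover have "lead_coeff f \<noteq> 0" using assms by (simp add: rsimp_def)
  ultimately show ?thesis using CR_mult CR_const CR_prod_lin rsimp_fin[OF assms] by metis
qed



lemma pderiv_sum': "pderiv (\<Sum>y\<in>C. f y) = (\<Sum>y\<in>C. pderiv (f y))"
  by (induction C rule: infinite_finite_induct) (simp_all add: pderiv_add)

lemma IL_conseq:
  assumes "IL P Q"
  shows "(\<forall>a. poly Q a = 0 \<longrightarrow> order a Q = 1) \<and> (\<forall>a. poly P a = 0 \<longrightarrow> order a P = 1)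
    \<and> degree P = degree Q + 1
    \<and> (\<forall>(n::nat) (a::nat \<Rightarrow> real).
            strict_mono_on {1..n} a \<and> a ` {1..n} = {r. poly P r = 0}
            \<longrightarrow> (\<exists>b::nat \<Rightarrow> real.
                   strict_mono_on {1..<n} b \<and> b ` {1..<n} = {r. poly Q r = 0}
                   \<and> (\<forall>i\<in>{1..<n}. a i < b i \<and> b i < a (Suc i))))"
proof -
  have rP: "rsimp P" and rQ: "rsimp Q" and dg: "degree P = degree Q + 1"
    and W: "\<And>x. Wr P Q x > 0" using assms by (auto simp: IL_def)
  have oQ: "\<forall>a. poly Q a = 0 \<longrightarrow> order a Q = 1"
  proof (intro allI impI)
    fix a assume a: "poly Q a = 0"
    have "Wr P Q a > 0" by (rule W)
    then have "poly (pderiv Q) a \<noteq> 0" using a by (auto simp: Wr_def)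
    then show "order a Q = 1" using order_one a by blast
  qed
  have oP: "\<forall>a. poly P a = 0 \<longrightarrow> order a P = 1"
  proof (intro allI impI)
    fix a assume a: "poly P a = 0"
    have "Wr P Q a > 0" by (rule W)
    then have "poly (pderiv P) a \<noteq> 0" using a by (auto simp: Wr_def)
    then show "order a P = 1" using order_one a by blast
  qed
  have il: "\<exists>b::nat \<Rightarrow> real.
                   strict_mono_on {1..<n} b \<and> b ` {1..<n} = {r. poly Q r = 0}
                   \<and> (\<forall>i\<in>{1..<n}. a i < b i \<and> b i < a (Suc i))"
    if sm: "strict_mono_on {1..n} a" and im: "a ` {1..n} = {r. poly P r = 0}" for n and a :: "nat \<Rightarrow> real"
  proof -
    have ex: "\<exists>r. a i < r \<and> r < a (Suc i) \<and> poly Q r = 0" if i: "i \<in> {1..<n}" for i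
    proof -
      have i1: "i \<in> {1..n}" and i2: "Suc i \<in> {1..n}" using i by auto
      have u: "poly P (a i) = 0" and v: "poly P (a (Suc i)) = 0" using im i1 i2 by auto
      have uv: "a i < a (Suc i)" using strict_mono_onD[OF sm i1 i2] by simp
      have nb: "\<forall>w. poly P w = 0 \<longrightarrow> \<not> (a i < w \<and> w < a (Suc i))"
      proof (intro allI impI notI)
        fix w assume "poly P w = 0" and w: "a i < w \<and> w < a (Suc i)"
        then obtain j where j: "j \<in> {1..n}" "w = a j" using im by (metis (mono_tags) imageE mem_Collect_eq)
        show False
        proof (cases "j \<le> i")
          case True
          have "a j \<le> a i"
          proof (cases "j = i")
            case False
            then have "j < i" using True by simp
            then show ?thesis using less_imp_le[OF strict_mono_onD[OF sm j(1) i1]] by simp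
          qed simp
          then show False using w j by simp
        next
          case False
          have "a (Suc i) \<le> a j"
          proof (cases "j = Suc i")
            case F2: False
            then have "Suc i < j" using False by simp
            then show ?thesis using less_imp_le[OF strict_mono_onD[OF sm i2 j(1)]] by simp
          qed simp
          then show False using w j by simp
        qed
      qed
      have gu: "poly Q (a i) * poly (pderiv P) (a i) > 0" using W[of "a i"] u by (simp add: Wr_def mult.commute)
      have gv: "poly Q (a (Suc i)) * poly (pderiv P) (a (Suc i)) > 0" using W[of "a (Suc i)"] v by (simp add: Wr_def mult.commute)
      show ?thesis using gap_root[OF rP u v uv nb gu gv] by blast
    qed
    define b where "b i = (SOME r. a i < r \<and> r < a (Suc i) \<and> poly Q r = 0)" for i
    have bp: "a i < b i \<and> b i < a (Suc i) \<and> poly Q (b i) = 0" if "i \<in> {1..<n}" for i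
      unfolding b_def using someI_ex[OF ex[OF that]] .
    have smb: "strict_mono_on {1..<n} b"
    proof (rule strict_mono_onI)
      fix i j assume i: "i \<in> {1..<n}" and j: "j \<in> {1..<n}" and ij: "i < j"
      have "a (Suc i) \<le> a j"
      proof (cases "Suc i = j")
        case True then show ?thesis by simp
      next
        case False
        then have "Suc i < j" using ij by simp
        then show ?thesis using i j by (intro less_imp_le strict_mono_onD[OF sm]) auto
      qed
      then show "b i < b j" using bp[OF i] bp[OF j] by linarith
    qed
    have sub: "b ` {1..<n} \<subseteq> {r. poly Q r = 0}" using bp by auto
    have cP: "card {r. poly P r = 0} = n"
      using im strict_mono_on_imp_inj_on[OF sm] by (metis card_atLeastAtMost card_image diff_Suc_1)
    have "card {r. poly P r = 0} = degree P" using rP by (simp add: rsimp_def)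
    then have cQ: "card {r. poly Q r = 0} = n - 1" using cP dg rQ by (simp add: rsimp_def)
    have cb: "card (b ` {1..<n}) = n - 1"
      using strict_mono_on_imp_inj_on[OF smb] by (simp add: card_image)
    have "b ` {1..<n} = {r. poly Q r = 0}"
      using card_subset_eq[OF rsimp_fin[OF rQ] sub] cb cQ by simp
    then show ?thesis using smb bp by blast
  qed
  show ?thesis using oQ oP dg il by blast
qed


lemma IL_base:
  fixes c b :: real
  assumes c: "c > 0"
  shows "IL (smult c [:-b,1:]) 1"
proof -
  have r: "{x. poly (smult c [:-b,1:]) x = 0} = {b}" using c by auto
  have "pderiv (smult c [:-b,1:]) = [:c:]" by (simp add: pderiv_smult pderiv_pCons)
  then have "Wr (smult c [:-b,1:]) 1 x = c" for x by (simp add: Wr_def)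
  then show ?thesis using c r by (simp add: IL_def rsimp_def)
qed

lemma step:
  fixes C :: "'v set" and p s :: "'v \<Rightarrow> real poly" and ly :: "'v \<Rightarrow> real" and lx bt :: real
  assumes fin: "finite C" and ILy: "\<forall>y\<in>C. IL (p y) (s y)" and ly: "\<forall>y\<in>C. ly y > 0" and lx: "lx > 0"
  shows "IL (smult (1/lx) ([:-bt,1:] * Lcm (p ` C) - (\<Sum>y\<in>C. smult (ly y) (Lcm (p ` C) * s y div p y)))) (Lcm (p ` C))
     \<and> rsimp (Lcm (p ` C)) \<and> (\<forall>y\<in>C. p y * (Lcm (p ` C) div p y) = Lcm (p ` C) \<and> p y \<noteq> 0)"
proof -
  define R where "R y = {x. poly (p y) x = 0}" for y
  define U where "U = (\<Union>y\<in>C. R y)"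
  define L where "L = (\<Prod>b\<in>U. [:-b,1:]::real poly)"
  have rp: "rsimp (p y)" and rs: "rsimp (s y)" and dps: "degree (p y) = degree (s y) + 1"
    and Wy: "\<And>z. Wr (p y) (s y) z > 0" if "y \<in> C" for y
    using ILy that by (auto simp: IL_def)
  have p0: "p y \<noteq> 0" if "y \<in> C" for y using rp[OF that] by (simp add: rsimp_def)
  have s0: "s y \<noteq> 0" if "y \<in> C" for y using rs[OF that] by (simp add: rsimp_def)
  have finU: "finite U" unfolding U_def R_def using fin rsimp_fin rp by blast
  have rL: "rsimp L" unfolding L_def by (rule rsimp_prod_lin[OF finU])
  have rootsL: "{x. poly L x = 0} = U" unfolding L_def by (rule roots_prod_lin[OF finU])
  have leadL: "lead_coeff L = 1" unfolding L_def by (rule lead_prod_lin)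
  have L0: "L \<noteq> 0" using rL by (simp add: rsimp_def)
  have degL: "degree L = card U" unfolding L_def by (rule degree_prod_lin[OF finU])
  have pdvd: "p y dvd L" if y: "y \<in> C" for y
  proof -
    have "p y = smult (lead_coeff (p y)) (\<Prod>b\<in>R y. [:-b,1:])"
      unfolding R_def by (rule rsimp_factor[OF rp[OF y]])
    moreover have "(\<Prod>b\<in>R y. [:-b,1:]) dvd L"
      unfolding L_def by (rule prod_dvd_prod_subset[OF finU]) (use y U_def in auto)
    moreover have "lead_coeff (p y) \<noteq> 0" using p0[OF y] by simp
    ultimately show ?thesis by (metis smult_dvd)
  qed
  have LcmL: "Lcm (p ` C) = L"
  proof (rule Lcm_eqI)
    show "normalize L = L" using leadL by (simp add: normalize_poly_def one_pCons[symmetric])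
    show "b dvd L" if "b \<in> p ` C" for b using that pdvd by auto
    show "L dvd c" if h: "\<And>b. b \<in> p ` C \<Longrightarrow> b dvd c" for c
    proof -
      have "\<forall>b\<in>U. poly c b = 0"
      proof
        fix b assume "b \<in> U"
        then obtain y where y: "y \<in> C" "poly (p y) b = 0" unfolding U_def R_def by auto
        have "p y dvd c" using h y by auto
        then obtain k where "c = p y * k" by (elim dvdE)
        then show "poly c b = 0" using y by simp
      qed
      then show ?thesis unfolding L_def by (rule prod_lin_dvd[OF finU])
    qed
  qed
  define Q where "Q y = L div p y" for y
  have pQ: "p y * Q y = L" if "y \<in> C" for y unfolding Q_def using pdvd[OF that] by simp
  have Q0: "Q y \<noteq> 0" if "y \<in> C" for y using pQ[OF that] L0 by auto
  have divs: "L * s y div p y = Q y * s y" if y: "y \<in> C" for y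
  proof -
    have h: "L * s y = p y * (Q y * s y)" by (metis pQ[OF y] mult.assoc)
    show ?thesis unfolding h by (rule nonzero_mult_div_cancel_left[OF p0[OF y]])
  qed
  define S where "S = (\<Sum>y\<in>C. smult (ly y) (Q y * s y))"
  have sumeq: "(\<Sum>y\<in>C. smult (ly y) (L * s y div p y)) = S"
    unfolding S_def by (rule sum.cong) (simp_all add: divs)
  define A where "A = [:-bt,1:] * L"
  define P where "P = smult (1/lx) (A - S)"
  have "degree A = degree [:-bt,1::real:] + degree L" unfolding A_def by (rule degree_mult_eq) (simp_all add: L0)
  then have degA: "degree A = degree L + 1" by simp
  have "lead_coeff A = lead_coeff [:-bt,1::real:] * lead_coeff L" unfolding A_def by (rule lead_coeff_mult)
  then have leadA: "lead_coeff A = 1" using leadL by simp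
  have degQs: "degree (smult (ly y) (Q y * s y)) \<le> degree L - 1" if y: "y \<in> C" for y
  proof -
    have "degree L = degree (p y) + degree (Q y)"
      using pQ[OF y] degree_mult_eq[OF p0[OF y] Q0[OF y]] by simp
    moreover have "degree (Q y * s y) = degree (Q y) + degree (s y)"
      using degree_mult_eq[OF Q0[OF y] s0[OF y]] by simp
    ultimately show ?thesis using dps[OF y] by simp
  qed
  have degS: "degree S < degree A"
  proof -
    have "degree S \<le> degree L - 1" unfolding S_def by (rule degree_sum_le[OF fin degQs])
    then show ?thesis using degA by simp
  qed
  have AS: "A - S = - S + A" by simp
  have h1: "degree (- S + A) = degree A" by (rule degree_add_eq_right) (simp add: degS)
  have dAS: "degree (A - S) = degree A" using h1 by (simp only: AS)
  have h2: "lead_coeff (- S + A) = lead_coeff A" by (rule lead_coeff_add_le) (simp add: degS)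
  have lAS: "lead_coeff (A - S) = lead_coeff A" using h2 by (simp only: AS)
  have degP: "degree P = degree L + 1"
    unfolding P_def using lx dAS degA by simp
  have leadP: "lead_coeff P = 1 / lx"
    unfolding P_def using lx lAS leadA dAS by simp
  have P0: "P \<noteq> 0" using leadP lx by auto
  have Wpos: "Wr P L z > 0" for z
  proof -
    let ?Lz = "poly L z" and ?L1 = "poly (pderiv L) z"
    define D where "D y = poly (pderiv (Q y)) z * poly (s y) z + poly (Q y) z * poly (pderiv (s y)) z" for y
    define E where "E y = poly (Q y) z * poly (s y) z" for y
    have dA: "poly (pderiv A) z = ?Lz + (z - bt) * ?L1" unfolding A_def pderiv_mult
      by (simp add: pderiv_pCons algebra_simps)
    have pS: "pderiv S = (\<Sum>y\<in>C. smult (ly y) (pderiv (Q y * s y)))"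
      unfolding S_def by (simp add: pderiv_sum' pderiv_smult)
    have pD: "poly (pderiv (Q y * s y)) z = D y" for y unfolding D_def pderiv_mult
      by (simp add: algebra_simps)
    have dS: "poly (pderiv S) z = (\<Sum>y\<in>C. ly y * D y)" unfolding pS poly_sum by (simp add: pD)
    have "pderiv P = smult (1/lx) (pderiv A - pderiv S)" unfolding P_def by (simp add: pderiv_smult pderiv_diff)
    then have e1: "poly (pderiv P) z = (1/lx) * (?Lz + (z - bt) * ?L1 - (\<Sum>y\<in>C. ly y * D y))"
      using dA dS by simp
    have eS: "poly S z = (\<Sum>y\<in>C. ly y * E y)" unfolding S_def poly_sum E_def by simp
    have eA: "poly A z = (z - bt) * ?Lz" unfolding A_def by (simp add: algebra_simps)
    have e2: "poly P z = (1/lx) * ((z - bt) * ?Lz - (\<Sum>y\<in>C. ly y * E y))"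
      unfolding P_def using eS eA by simp
    have e3: "E y * ?L1 - D y * ?Lz = (poly (Q y) z)^2 * Wr (p y) (s y) z" if y: "y \<in> C" for y
    proof -
      have l1: "?Lz = poly (p y) z * poly (Q y) z" using pQ[OF y] by (metis poly_mult)
      have "pderiv L = p y * pderiv (Q y) + Q y * pderiv (p y)" using pQ[OF y] by (metis pderiv_mult)
      then have l2: "?L1 = poly (p y) z * poly (pderiv (Q y)) z + poly (Q y) z * poly (pderiv (p y)) z"
        by simp
      show ?thesis unfolding l1 l2 E_def D_def Wr_def by (simp add: power2_eq_square algebra_simps)
    qed
    have "Wr P L z = (1/lx) * (?Lz^2 + ((\<Sum>y\<in>C. ly y * E y) * ?L1 - (\<Sum>y\<in>C. ly y * D y) * ?Lz))"
      unfolding Wr_def e1 e2 by (simp add: algebra_simps power2_eq_square)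
    also have "(\<Sum>y\<in>C. ly y * E y) * ?L1 - (\<Sum>y\<in>C. ly y * D y) * ?Lz
        = (\<Sum>y\<in>C. ly y * E y * ?L1) - (\<Sum>y\<in>C. ly y * D y * ?Lz)"
      by (simp add: sum_distrib_right)
    also have "\<dots> = (\<Sum>y\<in>C. ly y * E y * ?L1 - ly y * D y * ?Lz)"
      by (rule sum_subtractf[symmetric])
    also have "\<dots> = (\<Sum>y\<in>C. ly y * (E y * ?L1 - D y * ?Lz))"
      by (rule sum.cong) (simp_all add: algebra_simps)
    also have "\<dots> = (\<Sum>y\<in>C. ly y * ((poly (Q y) z)^2 * Wr (p y) (s y) z))"
      by (rule sum.cong) (simp_all add: e3)
    finally have W: "Wr P L z = (1/lx) * (?Lz^2 + (\<Sum>y\<in>C. ly y * ((poly (Q y) z)^2 * Wr (p y) (s y) z)))" .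
    have nn: "\<And>y. y \<in> C \<Longrightarrow> 0 \<le> ly y * ((poly (Q y) z)^2 * Wr (p y) (s y) z)"
      using ly Wy by (simp add: less_imp_le)
    have "?Lz^2 + (\<Sum>y\<in>C. ly y * ((poly (Q y) z)^2 * Wr (p y) (s y) z)) > 0"
    proof (cases "?Lz = 0")
      case False
      then have "?Lz^2 > 0" by simp
      moreover have "(\<Sum>y\<in>C. ly y * ((poly (Q y) z)^2 * Wr (p y) (s y) z)) \<ge> 0"
        using nn by (simp add: sum_nonneg)
      ultimately show ?thesis by linarith
    next
      case True
      then have "z \<in> U" using rootsL by auto
      then obtain y where y: "y \<in> C" "poly (p y) z = 0" unfolding U_def R_def by auto
      have "pderiv L = p y * pderiv (Q y) + Q y * pderiv (p y)" using pQ[OF y(1)] by (metis pderiv_mult)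
      then have "?L1 = poly (Q y) z * poly (pderiv (p y)) z" using y by simp
      moreover have "?L1 \<noteq> 0"
      proof -
        have "?L1 = lead_coeff L * (\<Prod>b\<in>{x. poly L x = 0} - {z}. z - b)"
          by (rule deriv_root[OF rL True])
        moreover have "(\<Prod>b\<in>{x. poly L x = 0} - {z}. z - b) \<noteq> 0"
          using rsimp_fin[OF rL] by (subst prod_zero_iff) auto
        ultimately show ?thesis using leadL by simp
      qed
      ultimately have "poly (Q y) z \<noteq> 0" by auto
      then have posy: "ly y * ((poly (Q y) z)^2 * Wr (p y) (s y) z) > 0"
        using ly y Wy[OF y(1)] by simp
      have "(\<Sum>y\<in>C. ly y * ((poly (Q y) z)^2 * Wr (p y) (s y) z)) > 0"
        by (rule sum_pos2[OF fin y(1)]) (use posy nn in auto)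
      then show ?thesis using zero_le_power2[of "poly L z"] by linarith
    qed
    then show ?thesis unfolding W using lx by simp
  qed
  have sr: "\<forall>r. poly P r = 0 \<longrightarrow> poly (pderiv P) r \<noteq> 0"
  proof (intro allI impI)
    fix r assume "poly P r = 0"
    then show "poly (pderiv P) r \<noteq> 0" using Wpos[of r] by (auto simp: Wr_def)
  qed
  have Pneg: "poly P u < 0" if "u \<in> U" and "poly (pderiv L) u > 0" for u
  proof -
    have "poly L u = 0" using that rootsL by auto
    then have "Wr P L u = - (poly P u * poly (pderiv L) u)" by (simp add: Wr_def)
    then have "poly P u * poly (pderiv L) u < 0" using Wpos[of u] by linarith
    then show ?thesis using that(2) by (simp add: mult_less_0_iff)
  qed
  have cnt: "card U \<le> card {x. poly P x = 0}"
  proof -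
    have finS: "finite {x. poly P x = 0}" using P0 poly_roots_finite by blast
    have gaps: "\<forall>u\<in>U. \<forall>v\<in>U. u < v \<and> (\<forall>w\<in>U. \<not>(u<w \<and> w<v)) \<longrightarrow> (\<exists>s\<in>{x. poly P x = 0}. u<s \<and> s<v)"
    proof (intro ballI impI)
      fix u v assume u: "u \<in> U" and v: "v \<in> U" and uv: "u < v \<and> (\<forall>w\<in>U. \<not>(u<w \<and> w<v))"
      have Lu: "poly L u = 0" and Lv: "poly L v = 0" using u v rootsL by auto
      have nb: "\<forall>w. poly L w = 0 \<longrightarrow> \<not> (u < w \<and> w < v)" using uv rootsL by auto
      have gu: "poly (-P) u * poly (pderiv L) u > 0" using Wpos[of u] Lu by (simp add: Wr_def)
      have gv: "poly (-P) v * poly (pderiv L) v > 0" using Wpos[of v] Lv by (simp add: Wr_def)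
      obtain r where "u < r" "r < v" "poly (-P) r = 0"
        using gap_root[OF rL Lu Lv conjunct1[OF uv] nb gu gv] by blast
      then show "\<exists>s\<in>{x. poly P x = 0}. u<s \<and> s<v" by auto
    qed
    have top: "U \<noteq> {} \<longrightarrow> (\<exists>s\<in>{x. poly P x = 0}. Max U < s)"
    proof
      assume Une: "U \<noteq> {}"
      define M where "M = Max U"
      have MU: "M \<in> U" using Une finU M_def by simp
      have allw: "\<forall>w. poly L w = 0 \<longrightarrow> w \<le> M" using rootsL finU M_def by auto
      have LM: "poly L M = 0" using MU rootsL by auto
      have "poly (pderiv L) M > 0" using deriv_max[OF rL _ LM allw] leadL by simp
      then have PM: "poly P M < 0" using Pneg MU by blast
      obtain N where N: "\<forall>x\<ge>N. lead_coeff P \<le> poly P x"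
        using poly_pinfty_gt_lc[of P] leadP lx by auto
      define X where "X = max N (M + 1)"
      have "lead_coeff P \<le> poly P X" using N X_def by simp
      moreover have "0 < 1 / lx" using lx by simp
      ultimately have PX: "poly P X > 0" using leadP by linarith
      have MX: "M < X" using X_def by simp
      obtain r where "M < r" "r < X" "poly P r = 0" using poly_IVT_pos[OF MX PM PX] by blast
      then show "\<exists>s\<in>{x. poly P x = 0}. Max U < s" using M_def by auto
    qed
    show ?thesis by (rule mp[OF mp[OF mp[OF spec[OF count_gaps[OF finU], of "{x. poly P x = 0}"] finS] gaps] top])
  qed
  have rP: "rsimp P"
    by (rule rsimp_complete[OF P0 sr]) (use degP degL cnt in simp)
  have "IL P L" unfolding IL_def using rP rL leadP lx leadL degP Wpos by simp
  moreover have "P = smult (1/lx) ([:-bt,1:] * Lcm (p ` C) - (\<Sum>y\<in>C. smult (ly y) (Lcm (p ` C) * s y div p y)))"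
    unfolding P_def A_def LcmL sumeq ..
  ultimately show ?thesis using LcmL rL pQ p0 Q_def by simp
qed



lemma lev_par: "tree_struct par lev \<Longrightarrow> lev (par x) = Suc (lev x)"
  by (simp add: tree_struct_def)

lemma fin_children: "tree_struct par lev \<Longrightarrow> finite (children par x)"
  by (simp add: tree_struct_def)

lemma lev_funpow: "tree_struct par lev \<Longrightarrow> lev ((par ^^ k) t) = lev t + k"
  by (induction k) (simp_all add: lev_par)

lemma par_neq: "tree_struct par lev \<Longrightarrow> par x \<noteq> x"
  using lev_par[of par lev x] by (metis n_not_Suc_n)

lemma desc_self: "x \<in> desc par x"
  unfolding desc_def by (metis (mono_tags) funpow_0 mem_Collect_eq)

lemma desc_lev: "tree_struct par lev \<Longrightarrow> t \<in> desc par x \<Longrightarrow> lev t \<le> lev x"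
  unfolding desc_def using lev_funpow by fastforce

lemma par_not_desc: "tree_struct par lev \<Longrightarrow> par x \<notin> desc par x"
  using desc_lev lev_par by fastforce

lemma child_lev: "tree_struct par lev \<Longrightarrow> y \<in> children par x \<Longrightarrow> lev x = Suc (lev y)"
  unfolding children_def using lev_par by fastforce

lemma desc_zero: "tree_struct par lev \<Longrightarrow> lev x = 0 \<Longrightarrow> t \<in> desc par x \<Longrightarrow> t = x"
  unfolding desc_def using lev_funpow by fastforce

lemma desc_child:
  assumes "tree_struct par lev" "t \<in> desc par x" "t \<noteq> x"
  shows "\<exists>y\<in>children par x. t \<in> desc par y"
proof -
  obtain k where k: "(par ^^ k) t = x" using assms(2) unfolding desc_def by auto
  then obtain j where j: "k = Suc j" using assms(3) by (cases k) auto
  have "par ((par ^^ j) t) = x" using k j by simp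
  then have "(par ^^ j) t \<in> children par x" by (simp add: children_def)
  moreover have "t \<in> desc par ((par ^^ j) t)" unfolding desc_def by blast
  ultimately show ?thesis by blast
qed

lemma desc_unique:
  assumes tr: "tree_struct par lev" and y1: "y1 \<in> children par x" and y2: "y2 \<in> children par x"
    and t1: "t \<in> desc par y1" and t2: "t \<in> desc par y2"
  shows "y1 = y2"
proof -
  obtain k1 where k1: "(par ^^ k1) t = y1" using t1 unfolding desc_def by auto
  obtain k2 where k2: "(par ^^ k2) t = y2" using t2 unfolding desc_def by auto
  have "lev y1 = lev y2" using child_lev[OF tr y1] child_lev[OF tr y2] by simp
  moreover have "lev y1 = lev t + k1" using k1 lev_funpow[OF tr, of k1 t] by simp
  moreover have "lev y2 = lev t + k2" using k2 lev_funpow[OF tr, of k2 t] by simp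
  ultimately have "k1 = k2" by simp
  then show ?thesis using k1 k2 by simp
qed

lemma main_inv:
  assumes tr: "tree_struct par lev" and lam_pos: "\<forall>x. lam x > 0"
  shows "\<forall>x. lev x = n \<longrightarrow> IL (PQ par lam bet n x (par x)) (PQ par lam bet n x x)
           \<and> (\<forall>t\<in>desc par x. CR (PQ par lam bet n x t))"
proof (induction n)
  case 0
  show ?case
  proof (intro allI impI conjI ballI)
    fix x assume x: "lev x = 0"
    have "PQ par lam bet 0 x (par x) = smult (1 / lam x) [:- bet x, 1:]" using par_neq[OF tr] by simp
    moreover have "PQ par lam bet 0 x x = 1" by simp
    ultimately show "IL (PQ par lam bet 0 x (par x)) (PQ par lam bet 0 x x)"
      using IL_base[of "1 / lam x" "bet x"] lam_pos by simp
    fix t assume "t \<in> desc par x"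
    then have "t = x" using desc_zero[OF tr x] by simp
    then show "CR (PQ par lam bet 0 x t)" using CR_const[of 1] by (simp add: one_pCons)
  qed
next
  case (Suc n)
  show ?case
  proof (intro allI impI)
    fix x assume x: "lev x = Suc n"
    define C where "C = children par x"
    define p where "p y = PQ par lam bet n y x" for y
    define s where "s y = PQ par lam bet n y y" for y
    have finC: "finite C" using fin_children[OF tr] C_def by simp
    have levy: "lev y = n" if "y \<in> C" for y using child_lev[OF tr] that x C_def by fastforce
    have pary: "par y = x" if "y \<in> C" for y using that C_def by (simp add: children_def)
    have ILy: "\<forall>y\<in>C. IL (p y) (s y)" using Suc.IH levy pary p_def s_def by metis
    have CRy: "\<forall>t\<in>desc par y. CR (PQ par lam bet n y t)" if "y \<in> C" for y
      using Suc.IH levy[OF that] by blast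
    define L where "L = Lcm (p ` C)"
    have st: "IL (smult (1/lam x) ([:-bet x,1:] * L - (\<Sum>y\<in>C. smult (lam y) (L * s y div p y)))) L
     \<and> rsimp L \<and> (\<forall>y\<in>C. p y * (L div p y) = L \<and> p y \<noteq> 0)"
      unfolding L_def using step[OF finC ILy _ ] lam_pos by blast
    have eqx: "PQ par lam bet (Suc n) x x = L"
      unfolding L_def p_def C_def by (simp add: Let_def)
    have eqp: "PQ par lam bet (Suc n) x (par x) = smult (1/lam x) ([:-bet x,1:] * L - (\<Sum>y\<in>C. smult (lam y) (L * s y div p y)))"
      unfolding L_def p_def s_def C_def using par_neq[OF tr, of x] by (simp add: Let_def)
    have "IL (PQ par lam bet (Suc n) x (par x)) (PQ par lam bet (Suc n) x x)"
      using st eqx eqp by simp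
    moreover have "CR (PQ par lam bet (Suc n) x t)" if t: "t \<in> desc par x" for t
    proof (cases "t = x")
      case True
      then show ?thesis using eqx st CR_rsimp by simp
    next
      case False
      obtain y where y: "y \<in> C" "t \<in> desc par y" using desc_child[OF tr t False] C_def by blast
      have tp: "t \<noteq> par x" using par_not_desc[OF tr, of x] t by auto
      have the: "(THE y. y \<in> children par x \<and> t \<in> desc par y) = y"
        using y desc_unique[OF tr] C_def by (intro the_equality) auto
      have ex: "\<exists>y\<in>children par x. t \<in> desc par y" using y C_def by auto
      have "PQ par lam bet (Suc n) x t = L * PQ par lam bet n y t div p y"
        unfolding L_def p_def C_def using False tp ex the by (simp add: Let_def)
      also have "\<dots> = (L div p y) * PQ par lam bet n y t"
      proof -
        have py0: "p y \<noteq> 0" and pyL: "p y * (L div p y) = L" using st y(1) by auto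
        have h: "L * PQ par lam bet n y t = p y * ((L div p y) * PQ par lam bet n y t)"
          using pyL by (metis mult.assoc)
        show ?thesis unfolding h by (rule nonzero_mult_div_cancel_left[OF py0])
      qed
      finally have e: "PQ par lam bet (Suc n) x t = (L div p y) * PQ par lam bet n y t" .
      have "CR (p y * (L div p y))" using st y(1) CR_rsimp by simp
      then have "CR (L div p y)" by (rule CR_right)
      then show ?thesis unfolding e using CR_mult CRy[OF y(1)] y(2) by blast
    qed
    ultimately show "IL (PQ par lam bet (Suc n) x (par x)) (PQ par lam bet (Suc n) x x)
           \<and> (\<forall>t\<in>desc par x. CR (PQ par lam bet (Suc n) x t))" by blast
  qed
qed


theorem theorem1:
  fixes par :: "'v \<Rightarrow> 'v" and lev :: "'v \<Rightarrow> nat" and lam bet :: "'v \<Rightarrow> real"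
  assumes tree: "tree_struct par lev"
    and lam_pos: "\<forall>x. lam x > 0"
  shows "(\<forall>x. \<forall>t\<in>desc' par x. \<forall>z::complex.
            poly (map_poly complex_of_real (Ppoly par lev lam bet x t)) z = 0 \<longrightarrow> z \<in> \<real>)
    \<and> (\<forall>x.
         (\<forall>a. poly (Ppoly par lev lam bet x x) a = 0 \<longrightarrow> order a (Ppoly par lev lam bet x x) = 1)
       \<and> (\<forall>a. poly (Ppoly par lev lam bet x (par x)) a = 0 \<longrightarrow> order a (Ppoly par lev lam bet x (par x)) = 1)
       \<and> degree (Ppoly par lev lam bet x (par x)) = degree (Ppoly par lev lam bet x x) + 1
       \<and> (\<forall>(n::nat) (a::nat \<Rightarrow> real).
            strict_mono_on {1..n} a \<and> a ` {1..n} = {r. poly (Ppoly par lev lam bet x (par x)) r = 0}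
            \<longrightarrow> (\<exists>b::nat \<Rightarrow> real.
                   strict_mono_on {1..<n} b \<and> b ` {1..<n} = {r. poly (Ppoly par lev lam bet x x) r = 0}
                   \<and> (\<forall>i\<in>{1..<n}. a i < b i \<and> b i < a (Suc i)))))"
proof -
  have inv: "IL (Ppoly par lev lam bet x (par x)) (Ppoly par lev lam bet x x) \<and> (\<forall>t\<in>desc par x. CR (Ppoly par lev lam bet x t))" for x
    using main_inv[OF tree lam_pos, of "lev x" bet] unfolding Ppoly_def by blast
  have A: "\<forall>x. \<forall>t\<in>desc' par x. \<forall>z::complex.
            poly (map_poly complex_of_real (Ppoly par lev lam bet x t)) z = 0 \<longrightarrow> z \<in> \<real>"
  proof (rule allI, rule ballI)
    fix x t assume t: "t \<in> desc' par x"
    have "CR (Ppoly par lev lam bet x t)"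
    proof (cases "t = par x")
      case True
      then show ?thesis using inv[of x] CR_rsimp by (simp add: IL_def)
    next
      case False
      then have "t \<in> desc par x" using t by (simp add: desc'_def)
      then show ?thesis using inv[of x] by blast
    qed
    then show "\<forall>z::complex. poly (map_poly complex_of_real (Ppoly par lev lam bet x t)) z = 0 \<longrightarrow> z \<in> \<real>"
      by (simp add: CR_def)
  qed
  have B: "\<forall>x.
         (\<forall>a. poly (Ppoly par lev lam bet x x) a = 0 \<longrightarrow> order a (Ppoly par lev lam bet x x) = 1)
       \<and> (\<forall>a. poly (Ppoly par lev lam bet x (par x)) a = 0 \<longrightarrow> order a (Ppoly par lev lam bet x (par x)) = 1)
       \<and> degree (Ppoly par lev lam bet x (par x)) = degree (Ppoly par lev lam bet x x) + 1
       \<and> (\<forall>(n::nat) (a::nat \<Rightarrow> real).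
            strict_mono_on {1..n} a \<and> a ` {1..n} = {r. poly (Ppoly par lev lam bet x (par x)) r = 0}
            \<longrightarrow> (\<exists>b::nat \<Rightarrow> real.
                   strict_mono_on {1..<n} b \<and> b ` {1..<n} = {r. poly (Ppoly par lev lam bet x x) r = 0}
                   \<and> (\<forall>i\<in>{1..<n}. a i < b i \<and> b i < a (Suc i))))"
  proof
    fix x
    show "(\<forall>a. poly (Ppoly par lev lam bet x x) a = 0 \<longrightarrow> order a (Ppoly par lev lam bet x x) = 1)
       \<and> (\<forall>a. poly (Ppoly par lev lam bet x (par x)) a = 0 \<longrightarrow> order a (Ppoly par lev lam bet x (par x)) = 1)
       \<and> degree (Ppoly par lev lam bet x (par x)) = degree (Ppoly par lev lam bet x x) + 1
       \<and> (\<forall>(n::nat) (a::nat \<Rightarrow> real).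
            strict_mono_on {1..n} a \<and> a ` {1..n} = {r. poly (Ppoly par lev lam bet x (par x)) r = 0}
            \<longrightarrow> (\<exists>b::nat \<Rightarrow> real.
                   strict_mono_on {1..<n} b \<and> b ` {1..<n} = {r. poly (Ppoly par lev lam bet x x) r = 0}
                   \<and> (\<forall>i\<in>{1..<n}. a i < b i \<and> b i < a (Suc i))))"
      by (rule IL_conseq[OF conjunct1[OF inv[of x]]])
  qed
  show ?thesis by (rule conjI[OF A B])
qed

end
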